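(* Let $u,v:\mathbb{C}\to\mathbb{R}$ be harmonic and $f=u+iv$. Suppose there exist $0\le\alpha<1$, $a\ge 0$ and $b\in\mathbb{R}$ such that $v(z)\le a|u(z)|^{\alpha}+b$ for all $z\in\mathbb{C}$. Then $v$ is constant. In particular $f(\mathbb{C})$ is a horizontal line or a point. *)

theory Defs
  imports "HOL-Analysis.Analysis"
begin

text \<open>Directional partial derivative of a real-valued function on the plane
  (identified with the complex numbers) in direction d; for d = 1 this is
  the partial derivative in x, for d = i the partial derivative in y.\<close>
definition partial_dir :: "(complex \<Rightarrow> real) \<Rightarrow> complex \<Rightarrow> complex \<Rightarrow> real" where
  "partial_dir g d z = deriv (\<lambda>t::real. g (z + of_real t * d)) 0"

definition harmonic :: "(complex \<Rightarrow> real) \<Rightarrow> bool" where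
  "harmonic g \<longleftrightarrow>
     (\<forall>z. g differentiable (at z)) \<and>
     (\<forall>d\<in>{1, \<i>}. \<forall>z. partial_dir g d differentiable (at z)) \<and>
     (\<forall>d\<in>{1, \<i>}. \<forall>e\<in>{1, \<i>}. continuous_on UNIV (partial_dir (partial_dir g d) e)) \<and>
     (\<forall>z. partial_dir (partial_dir g 1) 1 z + partial_dir (partial_dir g \<i>) \<i> z = 0)"

text \<open>Real power x^p for x >= 0 with the usual convention 0^0 = 1
  (Isabelle's powr has 0 powr 0 = 0).\<close>
definition rpow :: "real \<Rightarrow> real \<Rightarrow> real" where
  "rpow x p = (if p = 0 then 1 else x powr p)"

end

theory Submission
  imports Defs "HOL-Complex_Analysis.Complex_Analysis"
begin


lemma line_deriv:
  fixes g :: "complex \<Rightarrow> real"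
  assumes "(g has_derivative D) (at (c + of_real s * d))"
  shows "((\<lambda>t. g (c + of_real t * d)) has_real_derivative D d) (at s)"
proof -
  have lin: "linear D" using assms has_derivative_linear by blast
  have 1: "((\<lambda>t::real. c + of_real t * d) has_derivative (\<lambda>h. of_real h * d)) (at s)"
    by (auto intro!: derivative_eq_intros)
  have "((\<lambda>t. g (c + of_real t * d)) has_derivative (\<lambda>h. D (of_real h * d))) (at s)"
    using has_derivative_compose[OF 1 assms] by (simp add: o_def)
  moreover have "(\<lambda>h. D (of_real h * d)) = (\<lambda>h. D d * h)"
  proof
    fix h :: real
    have "D (of_real h * d) = D (h *\<^sub>R d)" by (simp add: scaleR_conv_of_real)
    also have "\<dots> = h *\<^sub>R D d" using lin by (simp add: linear_scale)
    finally show "D (of_real h * d) = D d * h" by simp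
  qed
  ultimately show ?thesis by (simp add: has_field_derivative_def)
qed

lemma partial_dir_eq:
  fixes g :: "complex \<Rightarrow> real"
  assumes "(g has_derivative D) (at z)"
  shows "partial_dir g d z = D d"
proof -
  have "((\<lambda>t. g (z + of_real t * d)) has_real_derivative D d) (at 0)"
    using line_deriv[of g D z 0 d] assms by simp
  then show ?thesis unfolding partial_dir_def by (rule DERIV_imp_deriv)
qed

lemma lin_decomp:
  fixes D :: "complex \<Rightarrow> real"
  assumes "linear D"
  shows "D w = Re w * D 1 + Im w * D \<i>"
proof -
  have "w = Re w *\<^sub>R 1 + Im w *\<^sub>R \<i>" by (simp add: complex_eq_iff)
  then have "D w = D (Re w *\<^sub>R 1 + Im w *\<^sub>R \<i>)" by simp
  also have "\<dots> = Re w * D 1 + Im w * D \<i>"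
    using assms by (simp add: linear_add linear_scale)
  finally show ?thesis .
qed

lemma mixed_step:
  fixes u :: "complex \<Rightarrow> real"
  assumes du: "\<And>w. (u has_derivative Du w) (at w)"
  and dp: "\<And>w. (partial_dir u 1 has_derivative Dp w) (at w)"
  and dq: "\<And>w. (partial_dir u \<i> has_derivative Dq w) (at w)"
  and t: "t > 0"
  shows "\<exists>P Q. dist P z < 2*t \<and> dist Q z < 2*t \<and> Dp P \<i> = Dq Q 1"
proof -
  define p where "p = partial_dir u 1"
  define q where "q = partial_dir u \<i>"
  have pD: "p w = Du w 1" for w unfolding p_def using partial_dir_eq[OF du] by blast
  have qD: "q w = Du w \<i>" for w unfolding q_def using partial_dir_eq[OF du] by blast
  define \<Delta> where "\<Delta> = u (z + of_real t + \<i> * of_real t) - u (z + of_real t) - u (z + \<i> * of_real t) + u z"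
  have "\<exists>\<xi>. 0 < \<xi> \<and> \<xi> < t \<and>
     (\<lambda>s. u ((z + \<i> * of_real t) + of_real s * 1) - u (z + of_real s * 1)) t
   - (\<lambda>s. u ((z + \<i> * of_real t) + of_real s * 1) - u (z + of_real s * 1)) 0
   = (t - 0) * ((\<lambda>s. p ((z + \<i> * of_real t) + of_real s * 1) - p (z + of_real s * 1)) \<xi>)"
    apply (rule MVT2[OF t])
    apply (unfold pD)
    apply (intro DERIV_diff; rule line_deriv[OF du])
    done
  then obtain \<xi> where \<xi>: "0 < \<xi>" "\<xi> < t"
    and e1: "\<Delta> = t * (p (z + of_real \<xi> + \<i> * of_real t) - p (z + of_real \<xi>))"
    unfolding \<Delta>_def by (auto simp: algebra_simps)
  have "\<exists>\<eta>. 0 < \<eta> \<and> \<eta> < t \<and>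
     p ((z + of_real \<xi>) + of_real t * \<i>) - p ((z + of_real \<xi>) + of_real 0 * \<i>)
   = (t - 0) * Dp ((z + of_real \<xi>) + of_real \<eta> * \<i>) \<i>"
    apply (rule MVT2[OF t, where f="\<lambda>r. p ((z + of_real \<xi>) + of_real r * \<i>)"])
    apply (unfold p_def)
    apply (rule line_deriv[OF dp])
    done
  then obtain \<eta> where \<eta>: "0 < \<eta>" "\<eta> < t"
    and e2: "p (z + of_real \<xi> + \<i> * of_real t) - p (z + of_real \<xi>) = t * Dp (z + of_real \<xi> + \<i> * of_real \<eta>) \<i>"
    by (auto simp: algebra_simps)
  have "\<exists>\<eta>'. 0 < \<eta>' \<and> \<eta>' < t \<and>
     (\<lambda>r. u ((z + of_real t) + of_real r * \<i>) - u (z + of_real r * \<i>)) t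
   - (\<lambda>r. u ((z + of_real t) + of_real r * \<i>) - u (z + of_real r * \<i>)) 0
   = (t - 0) * ((\<lambda>r. q ((z + of_real t) + of_real r * \<i>) - q (z + of_real r * \<i>)) \<eta>')"
    apply (rule MVT2[OF t])
    apply (unfold qD)
    apply (intro DERIV_diff; rule line_deriv[OF du])
    done
  then obtain \<eta>' where \<eta>': "0 < \<eta>'" "\<eta>' < t"
    and f1: "\<Delta> = t * (q (z + of_real t + \<i> * of_real \<eta>') - q (z + \<i> * of_real \<eta>'))"
    unfolding \<Delta>_def by (auto simp: algebra_simps)
  have "\<exists>\<xi>'. 0 < \<xi>' \<and> \<xi>' < t \<and>
     q ((z + \<i> * of_real \<eta>') + of_real t * 1) - q ((z + \<i> * of_real \<eta>') + of_real 0 * 1)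
   = (t - 0) * Dq ((z + \<i> * of_real \<eta>') + of_real \<xi>' * 1) 1"
    apply (rule MVT2[OF t, where f="\<lambda>r. q ((z + \<i> * of_real \<eta>') + of_real r * 1)"])
    apply (unfold q_def)
    apply (rule line_deriv[OF dq])
    done
  then obtain \<xi>' where \<xi>': "0 < \<xi>'" "\<xi>' < t"
    and f2: "q (z + of_real t + \<i> * of_real \<eta>') - q (z + \<i> * of_real \<eta>') = t * Dq (z + of_real \<xi>' + \<i> * of_real \<eta>') 1"
    by (auto simp: algebra_simps)
  have "t * t * Dp (z + of_real \<xi> + \<i> * of_real \<eta>) \<i> = t * t * Dq (z + of_real \<xi>' + \<i> * of_real \<eta>') 1"
    using e1 e2 f1 f2 by (simp, metis)
  then have eq: "Dp (z + of_real \<xi> + \<i> * of_real \<eta>) \<i> = Dq (z + of_real \<xi>' + \<i> * of_real \<eta>') 1"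
    using t by simp
  have d: "dist (z + of_real x + \<i> * of_real y) z < 2 * t" if "0 < x" "x < t" "0 < y" "y < t" for x y
  proof -
    have "dist (z + of_real x + \<i> * of_real y) z = norm (of_real x + \<i> * of_real y)"
      by (simp add: dist_norm)
    also have "\<dots> \<le> norm (of_real x :: complex) + norm (\<i> * of_real y)" by (rule norm_triangle_ineq)
    also have "\<dots> < 2 * t" using that by (simp add: norm_mult)
    finally show ?thesis .
  qed
  show ?thesis using eq d[OF \<xi> \<eta>] d[OF \<xi>' \<eta>'] by blast
qed

lemma abs_aux: "\<bar>x - a\<bar> < \<bar>a - b\<bar> / 2 \<Longrightarrow> \<bar>y - b\<bar> < \<bar>a - b\<bar> / 2 \<Longrightarrow> x = y \<Longrightarrow> False"
  for x y a b :: real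
  using abs_triangle_ineq[of "a - x" "x - b"] abs_minus_commute[of x a] by simp

lemma mixed_sym:
  fixes u :: "complex \<Rightarrow> real"
  assumes du: "\<And>w. (u has_derivative Du w) (at w)"
  and dp: "\<And>w. (partial_dir u 1 has_derivative Dp w) (at w)"
  and dq: "\<And>w. (partial_dir u \<i> has_derivative Dq w) (at w)"
  and cp: "continuous_on UNIV (\<lambda>w. Dp w \<i>)"
  and cq: "continuous_on UNIV (\<lambda>w. Dq w 1)"
  shows "Dp z \<i> = Dq z 1"
proof (rule ccontr)
  assume ne: "Dp z \<i> \<noteq> Dq z 1"
  define e where "e = \<bar>Dp z \<i> - Dq z 1\<bar> / 2"
  have e: "e > 0" using ne by (simp add: e_def)
  obtain d1 where d1: "d1 > 0" "\<And>x. dist x z < d1 \<Longrightarrow> dist (Dp x \<i>) (Dp z \<i>) < e"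
    using cp e unfolding continuous_on_iff by blast
  obtain d2 where d2: "d2 > 0" "\<And>x. dist x z < d2 \<Longrightarrow> dist (Dq x 1) (Dq z 1) < e"
    using cq e unfolding continuous_on_iff by blast
  define t where "t = min d1 d2 / 2"
  have t: "t > 0" using d1 d2 by (simp add: t_def)
  obtain P Q where PQ: "dist P z < 2*t" "dist Q z < 2*t" "Dp P \<i> = Dq Q 1"
    using mixed_step[OF du dp dq t] by blast
  have "dist (Dp P \<i>) (Dp z \<i>) < e" using d1 PQ by (intro d1(2)) (simp add: t_def)
  moreover have "dist (Dq Q 1) (Dq z 1) < e" using d2 PQ by (intro d2(2)) (simp add: t_def)
  ultimately show False using PQ(3) abs_aux unfolding e_def dist_real_def by metis
qed

lemma harmonic_Re:
  fixes u :: "complex \<Rightarrow> real"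
  assumes "harmonic u"
  shows "\<exists>G. G holomorphic_on UNIV \<and> (\<forall>z. u z = Re (G z))"
proof -
  define p where "p = partial_dir u 1"
  define q where "q = partial_dir u \<i>"
  define Du where "Du w = frechet_derivative u (at w)" for w
  define Dp where "Dp w = frechet_derivative p (at w)" for w
  define Dq where "Dq w = frechet_derivative q (at w)" for w
  have du: "(u has_derivative Du w) (at w)" for w
    using assms unfolding harmonic_def Du_def by (simp add: frechet_derivative_works)
  have dp: "(p has_derivative Dp w) (at w)" for w
    using assms unfolding harmonic_def Dp_def p_def by (simp add: frechet_derivative_works)
  have dq: "(q has_derivative Dq w) (at w)" for w
    using assms unfolding harmonic_def Dq_def q_def by (simp add: frechet_derivative_works)
  have pD: "p w = Du w 1" for w unfolding p_def using partial_dir_eq[OF du] by blast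
  have qD: "q w = Du w \<i>" for w unfolding q_def using partial_dir_eq[OF du] by blast
  have pxy: "partial_dir p \<i> w = Dp w \<i>" for w using partial_dir_eq[OF dp] by blast
  have pxx: "partial_dir p 1 w = Dp w 1" for w using partial_dir_eq[OF dp] by blast
  have qyx: "partial_dir q 1 w = Dq w 1" for w using partial_dir_eq[OF dq] by blast
  have qyy: "partial_dir q \<i> w = Dq w \<i>" for w using partial_dir_eq[OF dq] by blast
  have cp: "continuous_on UNIV (\<lambda>w. Dp w \<i>)"
  proof -
    have "continuous_on UNIV (partial_dir p \<i>)" using assms unfolding harmonic_def p_def by simp
    moreover have "partial_dir p \<i> = (\<lambda>w. Dp w \<i>)" by (simp add: fun_eq_iff pxy)
    ultimately show ?thesis by simp
  qed
  have cq: "continuous_on UNIV (\<lambda>w. Dq w 1)"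
  proof -
    have "continuous_on UNIV (partial_dir q 1)" using assms unfolding harmonic_def q_def by simp
    moreover have "partial_dir q 1 = (\<lambda>w. Dq w 1)" by (simp add: fun_eq_iff qyx)
    ultimately show ?thesis by simp
  qed
  have sym: "Dp w \<i> = Dq w 1" for w
    using mixed_sym[OF du dp[unfolded p_def] dq[unfolded q_def] cp cq] .
  have lap: "Dp w 1 + Dq w \<i> = 0" for w
  proof -
    have "partial_dir p 1 w + partial_dir q \<i> w = 0" using assms unfolding harmonic_def p_def q_def by blast
    then show ?thesis by (simp add: pxx qyy)
  qed
  define g where "g w = complex_of_real (p w) - \<i> * complex_of_real (q w)" for w
  have gd: "(g has_field_derivative (complex_of_real (Dp w 1) - \<i> * complex_of_real (Dq w 1))) (at w)" for w
  proof -
    have "(g has_derivative (\<lambda>h. complex_of_real (Dp w h) - \<i> * complex_of_real (Dq w h))) (at w)"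
      unfolding g_def by (intro derivative_eq_intros) (auto intro: dp dq)
    moreover have "(\<lambda>h. complex_of_real (Dp w h) - \<i> * complex_of_real (Dq w h))
       = (\<lambda>h. (complex_of_real (Dp w 1) - \<i> * complex_of_real (Dq w 1)) * h)"
    proof
      fix h
      have lp: "Dp w h = Re h * Dp w 1 + Im h * Dp w \<i>"
        using lin_decomp has_derivative_linear[OF dp] by blast
      have lq: "Dq w h = Re h * Dq w 1 + Im h * Dq w \<i>"
        using lin_decomp has_derivative_linear[OF dq] by blast
      show "complex_of_real (Dp w h) - \<i> * complex_of_real (Dq w h)
         = (complex_of_real (Dp w 1) - \<i> * complex_of_real (Dq w 1)) * h"
        using sym[of w] lap[of w] by (simp add: complex_eq_iff lp lq algebra_simps eq_neg_iff_add_eq_0[symmetric])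
    qed
    ultimately show ?thesis by (simp add: has_field_derivative_def)
  qed
  have "g holomorphic_on UNIV"
    using gd by (auto simp: holomorphic_on_def field_differentiable_def)
  then obtain G0 where G0: "\<And>x. (G0 has_field_derivative g x) (at x)"
    using holomorphic_convex_primitive'[of UNIV g] by auto
  have "\<exists>c. \<forall>x\<in>UNIV. u x - Re (G0 x) = c"
  proof (rule has_derivative_zero_constant)
    fix x :: complex
    have "((\<lambda>x. u x - Re (G0 x)) has_derivative (\<lambda>h. Du x h - Re (g x * h))) (at x)"
      using G0[of x] du[of x] unfolding has_field_derivative_def
      by (intro derivative_eq_intros) auto
    moreover have "(\<lambda>h. Du x h - Re (g x * h)) = (\<lambda>h. 0)"
    proof
      fix h
      have "Du x h = Re h * Du x 1 + Im h * Du x \<i>"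
        using lin_decomp has_derivative_linear[OF du] by blast
      then show "Du x h - Re (g x * h) = 0"
        by (simp add: g_def pD qD)
    qed
    ultimately show "((\<lambda>x. u x - Re (G0 x)) has_derivative (\<lambda>h. 0)) (at x within UNIV)"
      by simp
  qed simp
  then obtain c where c: "\<And>x. u x = Re (G0 x) + c" by (metis UNIV_I add.commute diff_eq_eq)
  have "(\<lambda>z. G0 z + complex_of_real c) holomorphic_on UNIV"
  proof -
    have "((\<lambda>z. G0 z + complex_of_real c) has_field_derivative g x) (at x)" for x
      using G0[of x] by (auto intro!: derivative_eq_intros)
    then show ?thesis by (auto simp: holomorphic_on_def field_differentiable_def)
  qed
  moreover have "\<forall>z. u z = Re (G0 z + complex_of_real c)" using c by simp
  ultimately show ?thesis by blast
qed



lemma core_r: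
  fixes G H :: "complex \<Rightarrow> complex"
  assumes hG: "G holomorphic_on UNIV" and hH: "H holomorphic_on UNIV"
  and \<rho>: "\<rho> > 0" and near: "\<And>z. dist z z0 < \<rho> \<Longrightarrow> Re (H z) < M"
  and nz: "\<And>z. Re (H z) \<ge> M \<Longrightarrow> Re (G z) \<noteq> 0"
  and bnd: "\<And>z. Re (H z) - M - \<epsilon> * \<bar>Re (G z)\<bar> \<le> C"
  and C: "C \<ge> 0" and r: "r > 0" and eps: "\<epsilon> \<ge> 0"
  and z1: "Re (H z1) > M"
  shows "exp (r * (Re (H z1) - M - \<epsilon> * \<bar>Re (G z1)\<bar>)) \<le> cmod (z1 - z0) / \<rho>"
proof -
  define w where "w z = Re (H z) - M - \<epsilon> * \<bar>Re (G z)\<bar>" for z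
  define P where "P z = (if Re (G z) > 0 then G z else - G z)" for z
  define T where "T = {z. Re (G z) \<noteq> 0} - {z0}"
  define \<Omega> where "\<Omega> = {z. M < Re (H z)}"
  have cG: "continuous_on UNIV G" using hG by (rule holomorphic_on_imp_continuous_on)
  have cH: "continuous_on UNIV H" using hH by (rule holomorphic_on_imp_continuous_on)
  have cRG: "continuous_on UNIV (\<lambda>z. Re (G z))" using cG by (intro continuous_intros)
  have cRH: "continuous_on UNIV (\<lambda>z. Re (H z))" using cH by (intro continuous_intros)
  have oA: "open {z. 0 < Re (G z)}" by (rule open_Collect_less) (use cRG in auto)
  have oB: "open {z. Re (G z) < 0}" by (rule open_Collect_less) (use cRG in auto)
  have oT: "open T"
  proof -
    have "T = ({z. 0 < Re (G z)} \<union> {z. Re (G z) < 0}) - {z0}" unfolding T_def by auto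
    then show ?thesis using oA oB by auto
  qed
  have hPA: "P holomorphic_on {z. 0 < Re (G z)}"
    by (rule holomorphic_cong[THEN iffD2, OF refl, of _ _ G]) (auto simp: P_def intro: holomorphic_on_subset[OF hG])
  have hPB: "P holomorphic_on {z. Re (G z) < 0}"
    by (rule holomorphic_cong[THEN iffD2, OF refl, of _ _ "\<lambda>z. - G z"])
       (auto simp: P_def intro!: holomorphic_intros holomorphic_on_subset[OF hG])
  have hP: "P holomorphic_on T"
    by (rule holomorphic_on_subset[OF holomorphic_on_Un[OF hPA hPB oA oB]]) (auto simp: T_def)
  define F where "F z = exp (complex_of_real r * (H z - complex_of_real M - complex_of_real \<epsilon> * P z)) * complex_of_real \<rho> / (z - z0)" for z
  have hF: "F holomorphic_on T"
    unfolding F_def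
    by (intro holomorphic_intros hP holomorphic_on_subset[OF hH]) (auto simp: T_def)
  have ReP: "Re (P z) = \<bar>Re (G z)\<bar>" for z by (simp add: P_def)
  have nF: "cmod (F z) = exp (r * w z) * \<rho> / cmod (z - z0)" for z
    using \<rho> r by (simp add: F_def w_def norm_divide norm_mult norm_exp_eq_Re ReP)
  have oO: "open \<Omega>" unfolding \<Omega>_def by (rule open_Collect_less) (use cRH in auto)
  have clO: "closure \<Omega> \<subseteq> {z. M \<le> Re (H z)}"
    by (rule closure_minimal) (auto simp: \<Omega>_def intro!: closed_Collect_le cRH)
  have geT: "{z. M \<le> Re (H z)} \<subseteq> T"
  proof
    fix z assume "z \<in> {z. M \<le> Re (H z)}"
    then have "M \<le> Re (H z)" by simp
    moreover have "z \<noteq> z0" using near[of z0] \<rho> calculation by auto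
    ultimately show "z \<in> T" using nz unfolding T_def by auto
  qed
  have far: "cmod (z - z0) \<ge> \<rho>" if "M \<le> Re (H z)" for z
    using near[of z] that by (force simp: dist_norm)
  define R where "R = cmod z1 + cmod z0 + \<rho> * exp (r * C) + 1"
  define S where "S = \<Omega> \<inter> ball 0 R"
  have oS: "open S" unfolding S_def using oO by auto
  have clS: "closure S \<subseteq> {z. M \<le> Re (H z)} \<inter> cball 0 R"
  proof -
    have "R > 0" unfolding R_def using \<rho> by (smt (verit) norm_ge_zero exp_gt_zero mult_pos_pos)
    then show ?thesis
      using clO closure_mono[of S \<Omega>] closure_mono[of S "ball 0 R"] closure_ball[of 0 R]
      unfolding S_def by auto
  qed
  have "cmod (F z1) \<le> 1"
  proof (rule maximum_modulus_frontier[of F S])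
    show "F holomorphic_on interior S"
    proof (rule holomorphic_on_subset[OF hF])
      show "interior S \<subseteq> T" using interior_subset[of S] geT unfolding S_def \<Omega>_def by fastforce
    qed
    show "continuous_on (closure S) F"
      using clS geT by (intro holomorphic_on_imp_continuous_on holomorphic_on_subset[OF hF]) auto
    show "bounded S" unfolding S_def by auto
    have "0 < cmod z0 + (\<rho> * exp (r * C) + 1)" using \<rho> by (smt (verit) norm_ge_zero exp_gt_zero mult_pos_pos)
    then show "z1 \<in> S" unfolding S_def \<Omega>_def R_def using z1 \<rho> by auto
  next
    fix z assume zf: "z \<in> frontier S"
    then have zc: "z \<in> closure S" and zS: "z \<notin> S"
      using oS by (auto simp: frontier_def interior_open)
    have zM: "M \<le> Re (H z)" and zR: "cmod z \<le> R" using clS zc by auto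
    have d: "cmod (z - z0) \<ge> \<rho>" using far zM .
    have wC: "w z \<le> C" using bnd unfolding w_def by blast
    show "cmod (F z) \<le> 1"
    proof (cases "z \<in> \<Omega>")
      case False
      then have "w z \<le> 0"
        unfolding w_def \<Omega>_def using zM eps by (auto intro!: mult_nonneg_nonneg)
      then have "exp (r * w z) \<le> 1" using r by (simp add: mult_nonpos_nonneg mult_le_0_iff)
      moreover have "\<rho> / cmod (z - z0) \<le> 1" using d \<rho> by (simp add: divide_le_eq_1)
      ultimately have "exp (r * w z) * (\<rho> / cmod (z - z0)) \<le> 1 * 1"
        by (intro mult_mono) (use \<rho> in auto)
      then show ?thesis by (simp add: nF)
    next
      case True
      then have "cmod z \<ge> R" using zS unfolding S_def by auto
      then have d2: "cmod (z - z0) \<ge> \<rho> * exp (r * C)"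
        using norm_triangle_ineq2[of z z0] unfolding R_def by (smt (verit) norm_ge_zero)
      have e1: "exp (r * w z) \<le> exp (r * C)" using wC r by simp
      have pos: "\<rho> * exp (r * C) > 0" using \<rho> by simp
      have "exp (r * w z) * \<rho> / cmod (z - z0) \<le> exp (r * C) * \<rho> / (\<rho> * exp (r * C))"
        by (intro frac_le mult_right_mono e1 d2) (use \<rho> pos in auto)
      also have "\<dots> = 1" using \<rho> by simp
      finally show ?thesis by (simp add: nF)
    qed
  qed
  then have "exp (r * w z1) * \<rho> / cmod (z1 - z0) \<le> 1" by (simp add: nF)
  moreover have "cmod (z1 - z0) > 0" using far[of z1] z1 \<rho> by force
  ultimately show ?thesis using \<rho> unfolding w_def by (simp add: field_simps)
qed

lemma core:
  fixes G H :: "complex \<Rightarrow> complex"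
  assumes hG: "G holomorphic_on UNIV" and hH: "H holomorphic_on UNIV"
  and \<rho>: "\<rho> > 0" and near: "\<And>z. dist z z0 < \<rho> \<Longrightarrow> Re (H z) < M"
  and nz: "\<And>z. Re (H z) \<ge> M \<Longrightarrow> Re (G z) \<noteq> 0"
  and bnd: "\<And>z. Re (H z) - M - \<epsilon> * \<bar>Re (G z)\<bar> \<le> C"
  and C: "C \<ge> 0" and eps: "\<epsilon> \<ge> 0"
  and z1: "Re (H z1) > M"
  shows "Re (H z1) - M - \<epsilon> * \<bar>Re (G z1)\<bar> \<le> 0"
proof (rule ccontr)
  define w1 where "w1 = Re (H z1) - M - \<epsilon> * \<bar>Re (G z1)\<bar>"
  define L where "L = cmod (z1 - z0) / \<rho>"
  assume "\<not> ?thesis"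
  then have w1: "w1 > 0" unfolding w1_def by simp
  define r where "r = (\<bar>ln L\<bar> + 1) / w1"
  have r: "r > 0" using w1 unfolding r_def by (simp add: add_nonneg_pos)
  have "exp (r * w1) \<le> L"
    using core_r[OF hG hH \<rho> near nz bnd C r eps z1] unfolding w1_def L_def by simp
  moreover have "r * w1 = \<bar>ln L\<bar> + 1" unfolding r_def using w1 by simp
  ultimately have A: "exp (\<bar>ln L\<bar> + 1) \<le> L" by simp
  have Lp: "L > 0" using A by (smt (verit) exp_gt_zero)
  have "exp (ln L) < exp (\<bar>ln L\<bar> + 1)" by simp
  then show False using A Lp by simp
qed

lemma growth:
  fixes \<alpha> a \<epsilon> :: real
  assumes "0 \<le> \<alpha>" "\<alpha> < 1" "a \<ge> 0" "\<epsilon> > 0"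
  shows "\<exists>C\<ge>0. \<forall>t\<ge>0. a * rpow t \<alpha> \<le> \<epsilon> * t + C"
proof (cases "\<alpha> = 0 \<or> a = 0")
  case True
  then show ?thesis
  proof
    assume "\<alpha> = 0" then show ?thesis using assms by (intro exI[of _ a]) (auto simp: rpow_def)
  next
    assume "a = 0" then show ?thesis using assms by (intro exI[of _ 0]) auto
  qed
next
  case False
  then have al: "\<alpha> > 0" and ap: "a > 0" using assms by auto
  define T where "T = (a / \<epsilon>) powr (1 / (1 - \<alpha>))"
  have T: "T > 0" unfolding T_def using ap assms by simp
  have TP: "T powr (\<alpha> - 1) = \<epsilon> / a"
  proof -
    have "T powr (\<alpha> - 1) = (a / \<epsilon>) powr (1 / (1 - \<alpha>) * (\<alpha> - 1))"
      unfolding T_def by (simp add: powr_powr)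
    also have "1 / (1 - \<alpha>) * (\<alpha> - 1) = - 1" using assms by (simp add: field_simps)
    also have "(a / \<epsilon>) powr (- 1) = \<epsilon> / a" using ap assms by (simp add: powr_minus)
    finally show ?thesis .
  qed
  show ?thesis
  proof (intro exI[of _ "a * T powr \<alpha>"] conjI allI impI)
    show "0 \<le> a * T powr \<alpha>" using ap by simp
    fix t :: real assume t: "0 \<le> t"
    show "a * rpow t \<alpha> \<le> \<epsilon> * t + a * T powr \<alpha>"
    proof (cases "t \<le> T")
      case True
      then have "t powr \<alpha> \<le> T powr \<alpha>" using t al by (intro powr_mono2) auto
      then have "a * t powr \<alpha> \<le> a * T powr \<alpha>" using ap by simp
      moreover have "\<epsilon> * t \<ge> 0" using t assms by simp
      ultimately show ?thesis using al by (simp add: rpow_def)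
    next
      case False
      then have tp: "t > 0" using T by simp
      have "t powr \<alpha> = t powr (1 + (\<alpha> - 1))" by simp
      also have "\<dots> = t powr 1 * t powr (\<alpha> - 1)" by (rule powr_add)
      also have "\<dots> = t * t powr (\<alpha> - 1)" using tp by simp
      also have "\<dots> \<le> t * T powr (\<alpha> - 1)"
        using False T tp assms by (intro mult_left_mono powr_mono2') auto
      finally have "t powr \<alpha> \<le> t * (\<epsilon> / a)" using TP by simp
      then have "a * t powr \<alpha> \<le> a * (t * (\<epsilon> / a))" using ap by (intro mult_left_mono) auto
      also have "\<dots> = \<epsilon> * t" using ap by simp
      finally show ?thesis using al ap T by (simp add: rpow_def add_increasing2)
    qed
  qed
qed

lemma bounded_above:
  fixes G H :: "complex \<Rightarrow> complex"
  assumes hG: "G holomorphic_on UNIV" and hH: "H holomorphic_on UNIV"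
  and al: "0 \<le> \<alpha>" "\<alpha> < 1" and a: "a \<ge> 0"
  and ineq: "\<And>z. Re (H z) \<le> a * rpow \<bar>Re (G z)\<bar> \<alpha> + b"
  shows "\<exists>M. \<forall>z. Re (H z) \<le> M"
proof (cases "\<alpha> = 0")
  case True
  then show ?thesis using ineq by (auto simp: rpow_def)
next
  case False
  then have alp: "\<alpha> > 0" using al by simp
  define M where "M = max b (Re (H 0)) + 1"
  have cRH: "continuous_on UNIV (\<lambda>z. Re (H z))"
    using holomorphic_on_imp_continuous_on[OF hH] by (intro continuous_intros)
  have "M - Re (H 0) > 0" unfolding M_def by simp
  then obtain \<rho> where \<rho>: "\<rho> > 0" and n0: "\<And>z. dist z 0 < \<rho> \<Longrightarrow> dist (Re (H z)) (Re (H 0)) < M - Re (H 0)"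
    using cRH unfolding continuous_on_iff by blast
  have near: "Re (H z) < M" if "dist z 0 < \<rho>" for z
    using n0[OF that] by (simp add: dist_real_def)
  have nz: "Re (G z) \<noteq> 0" if "Re (H z) \<ge> M" for z
  proof
    assume "Re (G z) = 0"
    then have "Re (H z) \<le> b" using ineq[of z] alp by (simp add: rpow_def)
    then show False using that unfolding M_def by simp
  qed
  have "Re (H z1) \<le> M" for z1
  proof (rule ccontr)
    assume "\<not> ?thesis"
    then have z1: "Re (H z1) > M" by simp
    define d where "d = Re (H z1) - M"
    define \<epsilon> where "\<epsilon> = d / (2 * (\<bar>Re (G z1)\<bar> + 1))"
    have d: "d > 0" using z1 unfolding d_def by simp
    have eps: "\<epsilon> > 0" unfolding \<epsilon>_def using d by (simp add: add_nonneg_pos)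
    obtain C0 where C0: "C0 \<ge> 0" "\<And>t. t \<ge> 0 \<Longrightarrow> a * rpow t \<alpha> \<le> \<epsilon> * t + C0"
      using growth[OF al a eps] by blast
    define C where "C = max 0 (C0 + b - M)"
    have bnd: "Re (H z) - M - \<epsilon> * \<bar>Re (G z)\<bar> \<le> C" for z
      using ineq[of z] C0(2)[of "\<bar>Re (G z)\<bar>"] unfolding C_def by simp
    have "Re (H z1) - M - \<epsilon> * \<bar>Re (G z1)\<bar> \<le> 0"
      by (rule core[of G H \<rho> 0, OF hG hH \<rho> near nz bnd _ _ z1]) (use eps in \<open>auto simp: C_def\<close>)
    moreover have "\<epsilon> * \<bar>Re (G z1)\<bar> < d"
    proof -
      have "\<epsilon> * \<bar>Re (G z1)\<bar> = d * (\<bar>Re (G z1)\<bar> / (2 * (\<bar>Re (G z1)\<bar> + 1)))"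
        unfolding \<epsilon>_def by simp
      also have "\<dots> < d * 1"
        using d by (intro mult_strict_left_mono) (auto simp: field_simps)
      finally show ?thesis by simp
    qed
    ultimately show False unfolding d_def by simp
  qed
  then show ?thesis by blast
qed

lemma Liouville_Re:
  fixes H :: "complex \<Rightarrow> complex"
  assumes hH: "H holomorphic_on UNIV" and M: "\<And>z. Re (H z) \<le> M"
  shows "\<exists>c. \<forall>z. Re (H z) = c"
proof -
  have "(\<lambda>z. exp (H z)) holomorphic_on UNIV" using hH by (intro holomorphic_intros)
  moreover have "bounded (range (\<lambda>z. exp (H z)))"
    unfolding bounded_iff using M by (intro exI[of _ "exp M"]) (auto simp: norm_exp_eq_Re)
  ultimately have "(\<lambda>z. exp (H z)) constant_on UNIV" by (rule Liouville_theorem)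
  then obtain k where k: "\<And>z. exp (H z) = k" unfolding constant_on_def by blast
  have "Re (H z) = ln (cmod k)" for z
    using k[of z] by (metis ln_exp norm_exp_eq_Re)
  then show ?thesis by blast
qed

theorem corollary1:
  fixes u v :: "complex \<Rightarrow> real" and \<alpha> a b :: real
  assumes "harmonic u" and "harmonic v"
    and "0 \<le> \<alpha>" and "\<alpha> < 1" and "a \<ge> 0"
    and "\<forall>z. v z \<le> a * rpow \<bar>u z\<bar> \<alpha> + b"
  shows "(\<exists>c. \<forall>z. v z = c) \<and>
         ((\<exists>c. (\<lambda>z. complex_of_real (u z) + \<i> * complex_of_real (v z)) ` UNIV = {w. Im w = c}) \<or>
          (\<exists>p. (\<lambda>z. complex_of_real (u z) + \<i> * complex_of_real (v z)) ` UNIV = {p}))"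
proof -
  obtain G where hG: "G holomorphic_on UNIV" and uG: "\<And>z. u z = Re (G z)"
    using harmonic_Re[OF assms(1)] by blast
  obtain H where hH: "H holomorphic_on UNIV" and vH: "\<And>z. v z = Re (H z)"
    using harmonic_Re[OF assms(2)] by blast
  obtain M where "\<forall>z. Re (H z) \<le> M"
    using bounded_above[OF hG hH assms(3,4,5)] assms(6) uG vH by metis
  then obtain c where c: "\<And>z. v z = c" using Liouville_Re[OF hH] vH by metis
  show ?thesis
  proof (intro conjI)
    show "\<exists>c. \<forall>z. v z = c" using c by blast
  next
    show "(\<exists>c. (\<lambda>z. complex_of_real (u z) + \<i> * complex_of_real (v z)) ` UNIV = {w. Im w = c}) \<or>
          (\<exists>p. (\<lambda>z. complex_of_real (u z) + \<i> * complex_of_real (v z)) ` UNIV = {p})"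
    proof (cases "\<exists>k. \<forall>z. u z = k")
      case True
      then obtain k where "\<And>z. u z = k" by blast
      then have "(\<lambda>z. complex_of_real (u z) + \<i> * complex_of_real (v z)) ` UNIV = {complex_of_real k + \<i> * complex_of_real c}"
        using c by auto
      then show ?thesis by blast
    next
      case False
      have above: "\<exists>z. u z > y" for y
      proof (rule ccontr)
        assume "\<not> ?thesis"
        then have "\<And>z. Re (G z) \<le> y" using uG by (metis not_less)
        then show False using Liouville_Re[OF hG] False uG by metis
      qed
      have below: "\<exists>z. u z < y" for y
      proof (rule ccontr)
        assume "\<not> ?thesis"
        then have "\<And>z. Re (- G z) \<le> - y" using uG by (metis neg_le_iff_le not_less uminus_complex.sel(1))
        moreover have "(\<lambda>z. - G z) holomorphic_on UNIV" using hG by (intro holomorphic_intros)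
        ultimately obtain k where "\<And>z. Re (- G z) = k" using Liouville_Re by metis
        then show False using False uG by (metis add.inverse_inverse uminus_complex.sel(1))
      qed
      have cu: "continuous_on UNIV u"
        unfolding uG[abs_def] using holomorphic_on_imp_continuous_on[OF hG] by (intro continuous_intros)
      have conn: "connected (range u)" by (rule connected_continuous_image[OF cu connected_UNIV])
      have ru: "y \<in> range u" for y
      proof -
        obtain z1 where "u z1 > y" using above by blast
        moreover obtain z2 where "u z2 < y" using below by blast
        ultimately show ?thesis using conn unfolding connected_iff_interval
          by (meson less_imp_le rangeI)
      qed
      have "(\<lambda>z. complex_of_real (u z) + \<i> * complex_of_real (v z)) ` UNIV = {w. Im w = c}"
      proof
        show "(\<lambda>z. complex_of_real (u z) + \<i> * complex_of_real (v z)) ` UNIV \<subseteq> {w. Im w = c}"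
          using c by auto
        show "{w. Im w = c} \<subseteq> (\<lambda>z. complex_of_real (u z) + \<i> * complex_of_real (v z)) ` UNIV"
        proof
          fix w assume "w \<in> {w. Im w = c}"
          then have w: "Im w = c" by simp
          obtain z where "u z = Re w" using ru by (metis rangeE)
          then have "w = complex_of_real (u z) + \<i> * complex_of_real (v z)"
            using w c by (simp add: complex_eq_iff)
          then show "w \<in> (\<lambda>z. complex_of_real (u z) + \<i> * complex_of_real (v z)) ` UNIV" by blast
        qed
      qed
      then show ?thesis by blast
    qed
  qed
qed

end
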